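(* An $Ł_n$-valued effectivity function $E:\mathcal P N\times Ł_n^S\to Ł_n$ is truly playable if and only if there is a game form $G=(N,\{\Sigma_i\mid i\in N\},S,o)$ such that $E=E_G$.
   Context: For a positive integer $n$ let $Ł_n=\{0,\frac1n,\dots,1\}$ with $\neg x=1-x$, $x\oplus y=\min(x+y,1)$, $x\odot y=\max(x+y-1,0)$, $\wedge=\min$, $\vee=\max$, applied pointwise on $Ł_n^S$; $0,1$ also denote constant functions. Standing assumptions: $N$ finite set of players, $S$ (possibly infinite) set of outcomes, $|N|\ge2$, $|S|\ge2$; coalitions $C\subseteq N$, $\overline C=N\setminus C$. A game form is $G=(N,\{\Sigma_i\mid i\in N\},S,o)$ with nonempty strategy sets $\Sigma_i$ and $o:\prod_{i\in N}\Sigma_i\to S$; $E_G(C,f)=\max_{\sigma_C}\min_{\sigma_{\overline C}} f(o(\sigma_C\sigma_{\overline C}))$, where $\sigma_C$, $\sigma_{\overline C}$ range over joint strategies of $C$ and $\overline C$ and $\sigma_C\sigma_{\overline C}$ is the combined profile. An $Ł_n$-valued effectivity function is any map $E:\mathcal P N\times Ł_n^S\to Ł_n$. It is: outcome monotonic if $f\ge g$ implies $E(C,f)\ge E(C,g)$; $N$-maximal if $\neg E(\varnothing,\neg f)\le E(N,f)$; superadditive if $E(C_1,f)\wedge E(C_2,g)\le E(C_1\cup C_2,f\wedge g)$ whenever $C_1\cap C_2=\varnothing$; homogeneous if $E(C,f\oplus f)=E(C,f)\oplus E(C,f)$ and $E(C,f\odot f)=E(C,f)\odot E(C,f)$; has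 liveness if $E(C,1)=1$ for all $C$; has safety if $E(C,0)=0$ for all $C$; principal if there is $g$ with $\{f\mid E(\varnothing,f)=1\}=\{f\mid f\ge g\odot\cdots\odot g\ (n\text{ factors})\}$. Playable: outcome monotonic, $N$-maximal, superadditive, homogeneous, liveness and safety; truly playable: playable and principal. *)

theory Defs
  imports Complex_Main "HOL-Library.FuncSet"
begin

definition Ln :: "nat \<Rightarrow> real set" where
  "Ln n = {real k / real n | k. k \<le> n}"

definition lneg :: "real \<Rightarrow> real" where "lneg x = 1 - x"
definition loplus :: "real \<Rightarrow> real \<Rightarrow> real" where "loplus x y = min (x + y) 1"
definition lodot :: "real \<Rightarrow> real \<Rightarrow> real" where "lodot x y = max (x + y - 1) 0"

fun lodot_pow :: "nat \<Rightarrow> real \<Rightarrow> real" where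
  "lodot_pow 0 x = 1"
| "lodot_pow (Suc k) x = lodot x (lodot_pow k x)"

text \<open>L_n-valued functions on the outcome set S (= the type 's).\<close>
definition Lfun :: "nat \<Rightarrow> ('s \<Rightarrow> real) set" where
  "Lfun n = {f. \<forall>s. f s \<in> Ln n}"

type_synonym ('p, 's) eff = "'p set \<Rightarrow> ('s \<Rightarrow> real) \<Rightarrow> real"

definition is_eff :: "nat \<Rightarrow> 'p set \<Rightarrow> ('p, 's) eff \<Rightarrow> bool" where
  "is_eff n N E \<longleftrightarrow> (\<forall>C f. C \<subseteq> N \<longrightarrow> f \<in> Lfun n \<longrightarrow> E C f \<in> Ln n)"

definition outcome_monotonic :: "nat \<Rightarrow> 'p set \<Rightarrow> ('p, 's) eff \<Rightarrow> bool" where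
  "outcome_monotonic n N E \<longleftrightarrow>
     (\<forall>C f g. C \<subseteq> N \<longrightarrow> f \<in> Lfun n \<longrightarrow> g \<in> Lfun n \<longrightarrow> f \<ge> g \<longrightarrow> E C f \<ge> E C g)"

definition N_maximal :: "nat \<Rightarrow> 'p set \<Rightarrow> ('p, 's) eff \<Rightarrow> bool" where
  "N_maximal n N E \<longleftrightarrow>
     (\<forall>f \<in> Lfun n. lneg (E {} (\<lambda>s. lneg (f s))) \<le> E N f)"

definition superadditive :: "nat \<Rightarrow> 'p set \<Rightarrow> ('p, 's) eff \<Rightarrow> bool" where
  "superadditive n N E \<longleftrightarrow>
     (\<forall>C1 C2 f g. C1 \<subseteq> N \<longrightarrow> C2 \<subseteq> N \<longrightarrow> C1 \<inter> C2 = {} \<longrightarrow>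
        f \<in> Lfun n \<longrightarrow> g \<in> Lfun n \<longrightarrow>
        min (E C1 f) (E C2 g) \<le> E (C1 \<union> C2) (\<lambda>s. min (f s) (g s)))"

definition homogeneous :: "nat \<Rightarrow> 'p set \<Rightarrow> ('p, 's) eff \<Rightarrow> bool" where
  "homogeneous n N E \<longleftrightarrow>
     (\<forall>C f. C \<subseteq> N \<longrightarrow> f \<in> Lfun n \<longrightarrow>
        E C (\<lambda>s. loplus (f s) (f s)) = loplus (E C f) (E C f) \<and>
        E C (\<lambda>s. lodot (f s) (f s)) = lodot (E C f) (E C f))"

definition liveness :: "'p set \<Rightarrow> ('p, 's) eff \<Rightarrow> bool" where
  "liveness N E \<longleftrightarrow> (\<forall>C. C \<subseteq> N \<longrightarrow> E C (\<lambda>_. 1) = 1)"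

definition safety :: "'p set \<Rightarrow> ('p, 's) eff \<Rightarrow> bool" where
  "safety N E \<longleftrightarrow> (\<forall>C. C \<subseteq> N \<longrightarrow> E C (\<lambda>_. 0) = 0)"

definition principal :: "nat \<Rightarrow> ('p, 's) eff \<Rightarrow> bool" where
  "principal n E \<longleftrightarrow>
     (\<exists>g \<in> Lfun n. {f \<in> Lfun n. E {} f = 1} = {f \<in> Lfun n. f \<ge> (\<lambda>s. lodot_pow n (g s))})"

definition playable :: "nat \<Rightarrow> 'p set \<Rightarrow> ('p, 's) eff \<Rightarrow> bool" where
  "playable n N E \<longleftrightarrow> outcome_monotonic n N E \<and> N_maximal n N E \<and> superadditive n N E \<and>
     homogeneous n N E \<and> liveness N E \<and> safety N E"

definition truly_playable :: "nat \<Rightarrow> 'p set \<Rightarrow> ('p, 's) eff \<Rightarrow> bool" where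
  "truly_playable n N E \<longleftrightarrow> playable n N E \<and> principal n E"

text \<open>A game form with player set N, strategy sets Sg i (for i in N), outcome set
  the type 's and outcome function o, defined on strategy profiles (elements of
  PiE N Sg).\<close>
definition game_form :: "'p set \<Rightarrow> ('p \<Rightarrow> 'b set) \<Rightarrow> (('p \<Rightarrow> 'b) \<Rightarrow> 's) \<Rightarrow> bool" where
  "game_form N Sg out \<longleftrightarrow> (\<forall>i \<in> N. Sg i \<noteq> {})"

definition combine :: "'p set \<Rightarrow> ('p \<Rightarrow> 'b) \<Rightarrow> ('p \<Rightarrow> 'b) \<Rightarrow> ('p \<Rightarrow> 'b)" where
  "combine C sC sD = (\<lambda>i. if i \<in> C then sC i else sD i)"

definition E_G :: "'p set \<Rightarrow> ('p \<Rightarrow> 'b set) \<Rightarrow> (('p \<Rightarrow> 'b) \<Rightarrow> 's) \<Rightarrow> ('p, 's) eff" where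
  "E_G N Sg out C f =
     Max ((\<lambda>sC. Min ((\<lambda>sD. f (out (combine C sC sD))) ` (PiE (N - C) Sg))) ` (PiE C Sg))"

end

theory Submission
  imports Defs
begin


lemma Ln_iff: "x \<in> Ln n \<longleftrightarrow> (\<exists>k. k \<le> n \<and> x = real k / real n)"
  unfolding Ln_def by auto

lemma finite_Ln: "finite (Ln n)"
proof -
  have "Ln n = (\<lambda>k. real k / real n) ` {..n}" unfolding Ln_def by auto
  thus ?thesis by simp
qed

lemma Ln_bounds: assumes "n \<ge> 1" "x \<in> Ln n" shows "0 \<le> x" "x \<le> 1"
  using assms by (auto simp: Ln_iff divide_le_eq_1)

lemma Ln_0: "(0::real) \<in> Ln n" unfolding Ln_iff by (rule exI[of _ 0]) auto
lemma Ln_1: "n \<ge> 1 \<Longrightarrow> (1::real) \<in> Ln n" unfolding Ln_iff by (rule exI[of _ n]) auto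

lemma Ln_loplus: assumes "n \<ge> 1" "x \<in> Ln n" "y \<in> Ln n" shows "loplus x y \<in> Ln n"
proof -
  obtain a b where ab: "a \<le> n" "b \<le> n" "x = real a / real n" "y = real b / real n"
    using assms by (auto simp: Ln_iff)
  show ?thesis
  proof (cases "a + b \<le> n")
    case True
    have s: "x + y = real (a+b) / real n" using ab by (simp add: add_divide_distrib)
    have "real (a+b) / real n \<le> 1" using True assms(1) by (simp add: divide_le_eq_1)
    hence "loplus x y = real (a+b) / real n" using s by (simp add: loplus_def)
    thus ?thesis using True unfolding Ln_iff by blast
  next
    case False
    hence "loplus x y = 1" using ab assms(1)
      by (auto simp: loplus_def add_divide_distrib[symmetric] le_divide_eq_1)
    thus ?thesis using Ln_1 assms(1) by simp
  qed
qed

lemma Ln_lodot: assumes "n \<ge> 1" "x \<in> Ln n" "y \<in> Ln n" shows "lodot x y \<in> Ln n"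
proof -
  obtain a b where ab: "a \<le> n" "b \<le> n" "x = real a / real n" "y = real b / real n"
    using assms by (auto simp: Ln_iff)
  show ?thesis
  proof (cases "a + b \<ge> n")
    case True
    have "x + y - 1 = real (a + b - n) / real n" using ab assms(1) True
      by (simp add: field_simps of_nat_diff)
    hence "lodot x y = real (a + b - n) / real n" by (simp add: lodot_def)
    thus ?thesis using ab unfolding Ln_iff by (intro exI[of _ "a+b-n"]) auto
  next
    case False
    have s: "x + y = real (a+b) / real n" using ab by (simp add: add_divide_distrib)
    have "real (a+b) / real n \<le> 1" using False assms(1) by (simp add: divide_le_eq_1)
    hence "x + y - 1 \<le> 0" using s by simp
    hence "lodot x y = 0" by (simp add: lodot_def)
    thus ?thesis using Ln_0 by simp
  qed
qed

lemma lodot_pow_formula: "0 \<le> x \<Longrightarrow> x \<le> 1 \<Longrightarrow> lodot_pow k x = max (real k * x - (real k - 1)) 0"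
  by (induction k) (auto simp: lodot_def max_def algebra_simps)

lemma lodot_pow_Ln: assumes "n \<ge> 1" "x \<in> Ln n"
  shows "lodot_pow n x = (if x = 1 then 1 else 0)"
proof -
  obtain a where a: "a \<le> n" "x = real a / real n" using assms by (auto simp: Ln_iff)
  have b: "0 \<le> x" "x \<le> 1" using Ln_bounds assms by auto
  have e: "real n * x = real a" using a assms(1) by simp
  show ?thesis
  proof (cases "a = n")
    case True thus ?thesis using a assms(1) lodot_pow_formula[OF b, of n] by simp
  next
    case False
    hence "a < n" using a by simp
    hence "x \<noteq> 1" using a assms(1) by auto
    moreover have "real n * x - (real n - 1) \<le> 0" using e \<open>a < n\<close> by simp
    ultimately show ?thesis using lodot_pow_formula[OF b, of n] by simp
  qed
qed

lemma Ln_eq_by_thresholds: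
  assumes "n \<ge> 1" "a \<in> Ln n" "b \<in> Ln n"
    and "\<And>k. 1 \<le> k \<Longrightarrow> k \<le> n \<Longrightarrow> (real k / real n \<le> a \<longleftrightarrow> real k / real n \<le> b)"
  shows "a = b"
proof -
  obtain i j where ij: "i \<le> n" "j \<le> n" "a = real i / real n" "b = real j / real n"
    using assms by (auto simp: Ln_iff)
  have np: "real n > 0" using assms(1) by simp
  have "\<not> i < j"
  proof
    assume "i < j"
    hence "real j / real n \<le> b" using ij by simp
    hence "real j / real n \<le> a" using assms(4)[of j] \<open>i<j\<close> ij by simp
    thus False using ij \<open>i < j\<close> np by (simp add: divide_le_cancel)
  qed
  moreover have "\<not> j < i"
  proof
    assume "j < i"
    hence "real i / real n \<le> a" using ij by simp
    hence "real i / real n \<le> b" using assms(4)[of i] \<open>j<i\<close> ij by simp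
    thus False using ij \<open>j < i\<close> np by (simp add: divide_le_cancel)
  qed
  ultimately show ?thesis using ij by simp
qed




lemma PiE_ne: "(\<forall>i\<in>A. Sg i \<noteq> {}) \<Longrightarrow> PiE A Sg \<noteq> {}"
  by (simp add: PiE_eq_empty_iff)

lemma Lfun_iff: "f \<in> Lfun n \<longleftrightarrow> (\<forall>s. f s \<in> Ln n)" by (simp add: Lfun_def)

definition inner :: "'p set \<Rightarrow> ('p \<Rightarrow> 'b set) \<Rightarrow> (('p \<Rightarrow> 'b) \<Rightarrow> 's) \<Rightarrow> 'p set \<Rightarrow> ('s \<Rightarrow> real) \<Rightarrow> ('p \<Rightarrow> 'b) \<Rightarrow> real" where
  "inner N Sg out C f sC = Min ((\<lambda>sD. f (out (combine C sC sD))) ` PiE (N - C) Sg)"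

context
  fixes n :: nat and N :: "'p set" and Sg :: "'p \<Rightarrow> 'b set" and out :: "('p \<Rightarrow> 'b) \<Rightarrow> 's"
    and C :: "'p set" and f :: "'s \<Rightarrow> real"
  assumes gf: "game_form N Sg out" and CN: "C \<subseteq> N" and fL: "f \<in> Lfun n"
begin


lemma inner_fin: "finite ((\<lambda>sD. f (out (combine C sC sD))) ` PiE (N - C) Sg)"
  by (rule finite_subset[OF _ finite_Ln[of n]]) (use fL in \<open>auto simp: Lfun_iff\<close>)

lemma inner_ne: "(\<lambda>sD. f (out (combine C sC sD))) ` PiE (N - C) Sg \<noteq> {}"
  using gf PiE_ne[of "N - C" Sg] by (auto simp: game_form_def)

lemma inner_Ln: "inner N Sg out C f sC \<in> Ln n"
proof -
  have "inner N Sg out C f sC \<in> (\<lambda>sD. f (out (combine C sC sD))) ` PiE (N - C) Sg"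
    unfolding inner_def using inner_fin inner_ne by (rule Min_in)
  thus ?thesis using fL by (auto simp: Lfun_iff)
qed

lemma outer_fin: "finite (inner N Sg out C f ` PiE C Sg)"
  by (rule finite_subset[OF _ finite_Ln[of n]]) (use inner_Ln in auto)

lemma outer_ne: "inner N Sg out C f ` PiE C Sg \<noteq> {}"
  using gf CN PiE_ne[of C Sg] by (auto simp: game_form_def)

lemma EG_inner: "E_G N Sg out C f = Max (inner N Sg out C f ` PiE C Sg)"
  unfolding E_G_def inner_def ..

lemma EG_Ln: "E_G N Sg out C f \<in> Ln n"
proof -
  have "Max (inner N Sg out C f ` PiE C Sg) \<in> inner N Sg out C f ` PiE C Sg" using outer_fin outer_ne by (rule Max_in)
  thus ?thesis using inner_Ln EG_inner by auto
qed

lemma EG_ge_iff: "t \<le> E_G N Sg out C f \<longleftrightarrow>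
   (\<exists>sC\<in>PiE C Sg. \<forall>sD\<in>PiE (N-C) Sg. t \<le> f (out (combine C sC sD)))"
  unfolding EG_inner Max_ge_iff[OF outer_fin outer_ne]
  by (auto simp: inner_def Min_ge_iff[OF inner_fin inner_ne])

lemma EG_le_iff: "E_G N Sg out C f \<le> t \<longleftrightarrow>
   (\<forall>sC\<in>PiE C Sg. \<exists>sD\<in>PiE (N-C) Sg. f (out (combine C sC sD)) \<le> t)"
  unfolding EG_inner Max_le_iff[OF outer_fin outer_ne]
  by (auto simp: inner_def Min_le_iff[OF inner_fin inner_ne])

end

lemma EG_mono_commute:
  assumes gf: "game_form N Sg out" and CN: "C \<subseteq> N" and fL: "f \<in> Lfun n"
    and hm: "mono h" and hL: "(\<lambda>s. h (f s)) \<in> Lfun n"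
  shows "E_G N Sg out C (\<lambda>s. h (f s)) = h (E_G N Sg out C f)"
proof -
  have i: "inner N Sg out C (\<lambda>s. h (f s)) sC = h (inner N Sg out C f sC)" for sC
    unfolding inner_def 
    using mono_Min_commute[OF hm inner_fin[OF gf CN fL] inner_ne[OF gf CN fL], of sC]
    by (simp add: image_image)
  show ?thesis
    unfolding EG_inner[OF gf CN fL] EG_inner[OF gf CN hL] i
    using mono_Max_commute[OF hm outer_fin[OF gf CN fL] outer_ne[OF gf CN fL]]
    by (simp add: image_image)
qed




lemma combine_empty[simp]: "combine {} a b = b"
  by (simp add: combine_def)

lemma combine_full: "sC \<in> PiE N Sg \<Longrightarrow> combine N sC sD = (\<lambda>i. if i \<in> N then sC i else sD i)"
  by (simp add: combine_def)

lemma combine_full_undef: "sC \<in> PiE N Sg \<Longrightarrow> combine N sC (\<lambda>_. undefined) = sC"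
  by (auto simp: combine_def fun_eq_iff PiE_iff extensional_def)

lemma PiE_empty_undef: "PiE {} Sg = {\<lambda>_. undefined}"
  by simp

lemma Lfun_lneg: "n \<ge> 1 \<Longrightarrow> f \<in> Lfun n \<Longrightarrow> (\<lambda>s. lneg (f s)) \<in> Lfun n"
proof -
  assume n: "n \<ge> 1" and f: "f \<in> Lfun n"
  { fix s
    obtain k where k: "k \<le> n" "f s = real k / real n" using f by (auto simp: Lfun_iff Ln_iff)
    have "lneg (f s) = real (n - k) / real n" using k n by (simp add: lneg_def of_nat_diff field_simps)
    hence "lneg (f s) \<in> Ln n" unfolding Ln_iff by (intro exI[of _ "n-k"]) auto }
  thus ?thesis by (simp add: Lfun_iff)
qed

lemma Lfun_const: "n \<ge> 1 \<Longrightarrow> (\<lambda>_. 1) \<in> Lfun n" "(\<lambda>_. 0) \<in> Lfun n"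
  by (auto simp: Lfun_iff Ln_1 Ln_0)

lemma Lfun_ops: assumes "n \<ge> 1" "f \<in> Lfun n" shows
  "(\<lambda>s. loplus (f s) (f s)) \<in> Lfun n" "(\<lambda>s. lodot (f s) (f s)) \<in> Lfun n"
  using assms Ln_loplus Ln_lodot by (auto simp: Lfun_iff)

lemma Lfun_min: "f \<in> Lfun n \<Longrightarrow> g \<in> Lfun n \<Longrightarrow> (\<lambda>s. min (f s) (g s)) \<in> Lfun n"
  by (auto simp: Lfun_iff min_def)

lemma mono_loplus: "mono (\<lambda>x. loplus x x)" by (auto simp: mono_def loplus_def)
lemma mono_lodot: "mono (\<lambda>x. lodot x x)" by (auto simp: mono_def lodot_def)

lemma reverse_dir:
  fixes N :: "'p set" and Sg :: "'p \<Rightarrow> 'b set" and out :: "('p \<Rightarrow> 'b) \<Rightarrow> 's" and E :: "('p,'s) eff"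
  assumes n: "n \<ge> 1" and gf: "game_form N Sg out"
    and EE: "\<forall>C f. C \<subseteq> N \<longrightarrow> f \<in> Lfun n \<longrightarrow> E C f = E_G N Sg out C f"
  shows "truly_playable n N E"
proof -
  have ne: "PiE A Sg \<noteq> {}" if "A \<subseteq> N" for A using gf that PiE_ne[of A Sg] by (auto simp: game_form_def)
  have om: "outcome_monotonic n N E"
    unfolding outcome_monotonic_def
  proof (intro allI impI)
    fix C and f g :: "'s \<Rightarrow> real" assume C: "C \<subseteq> N" and f: "f \<in> Lfun n" and g: "g \<in> Lfun n" and fg: "g \<le> f"
    have "E_G N Sg out C g \<le> E_G N Sg out C g" by simp
    then obtain sC where sC: "sC \<in> PiE C Sg"
      "\<forall>sD\<in>PiE (N-C) Sg. E_G N Sg out C g \<le> g (out (combine C sC sD))"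
      unfolding EG_ge_iff[OF gf C g] by blast
    have "E_G N Sg out C g \<le> E_G N Sg out C f"
      unfolding EG_ge_iff[OF gf C f]
    proof (intro bexI[OF _ sC(1)] ballI)
      fix sD assume "sD \<in> PiE (N-C) Sg"
      hence "E_G N Sg out C g \<le> g (out (combine C sC sD))" using sC(2) by blast
      also have "\<dots> \<le> f (out (combine C sC sD))" using fg by (simp add: le_fun_def)
      finally show "E_G N Sg out C g \<le> f (out (combine C sC sD))" .
    qed
    thus "E C g \<le> E C f" using EE C f g by simp
  qed
  have nm: "N_maximal n N E"
    unfolding N_maximal_def
  proof
    fix f :: "'s \<Rightarrow> real" assume f: "f \<in> Lfun n"
    have f': "(\<lambda>s. lneg (f s)) \<in> Lfun n" using Lfun_lneg n f by blast
    define w where "w = E_G N Sg out N f"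
    have "E_G N Sg out N f \<le> w" by (simp add: w_def)
    hence A: "\<forall>sC\<in>PiE N Sg. f (out sC) \<le> w"
      unfolding EG_le_iff[OF gf order_refl f] by (auto simp: combine_full_undef)
    have "1 - w \<le> E_G N Sg out {} (\<lambda>s. lneg (f s))"
      unfolding EG_ge_iff[OF gf empty_subsetI f'] using A by (simp add: lneg_def)
    thus "lneg (E {} (\<lambda>s. lneg (f s))) \<le> E N f"
      using EE f f' by (simp add: lneg_def w_def)
  qed
  have sa: "superadditive n N E"
    unfolding superadditive_def
  proof (intro allI impI)
    fix C1 C2 and f g :: "'s \<Rightarrow> real" assume C1: "C1 \<subseteq> N" and C2: "C2 \<subseteq> N" and dj: "C1 \<inter> C2 = {}"
      and f: "f \<in> Lfun n" and g: "g \<in> Lfun n"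
    have fg: "(\<lambda>s. min (f s) (g s)) \<in> Lfun n" using f g by (rule Lfun_min)
    have C12: "C1 \<union> C2 \<subseteq> N" using C1 C2 by auto
    define t where "t = min (E_G N Sg out C1 f) (E_G N Sg out C2 g)"
    have "t \<le> E_G N Sg out C1 f" by (simp add: t_def)
    then obtain s1 where s1: "s1 \<in> PiE C1 Sg" "\<forall>sD\<in>PiE (N-C1) Sg. t \<le> f (out (combine C1 s1 sD))"
      unfolding EG_ge_iff[OF gf C1 f] by blast
    have "t \<le> E_G N Sg out C2 g" by (simp add: t_def)
    then obtain s2 where s2: "s2 \<in> PiE C2 Sg" "\<forall>sD\<in>PiE (N-C2) Sg. t \<le> g (out (combine C2 s2 sD))"
      unfolding EG_ge_iff[OF gf C2 g] by blast
    define s12 where "s12 = (\<lambda>i. if i \<in> C1 then s1 i else s2 i)"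
    have s12: "s12 \<in> PiE (C1 \<union> C2) Sg" using s1(1) s2(1) by (auto simp: s12_def PiE_iff extensional_def)
    have "t \<le> E_G N Sg out (C1 \<union> C2) (\<lambda>s. min (f s) (g s))"
      unfolding EG_ge_iff[OF gf C12 fg]
    proof (intro bexI[OF _ s12] ballI)
      fix sD assume sD: "sD \<in> PiE (N - (C1 \<union> C2)) Sg"
      define p where "p = combine (C1 \<union> C2) s12 sD"
      have s1i: "i \<in> C1 \<Longrightarrow> s1 i \<in> Sg i" for i using s1(1) by (auto simp: PiE_iff)
      have s2i: "i \<in> C2 \<Longrightarrow> s2 i \<in> Sg i" for i using s2(1) by (auto simp: PiE_iff)
      have sDi: "i \<in> N - (C1 \<union> C2) \<Longrightarrow> sD i \<in> Sg i" for i using sD by (auto simp: PiE_iff)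
      have pout: "i \<notin> N \<Longrightarrow> p i = undefined" for i
      proof -
        assume "i \<notin> N"
        hence "i \<notin> C1 \<union> C2" "i \<notin> N - (C1 \<union> C2)" using C1 C2 by auto
        thus "p i = undefined" using PiE_arb[OF sD] by (simp add: p_def combine_def)
      qed
      have pin: "i \<in> N \<Longrightarrow> p i \<in> Sg i" for i
        using s1i s2i sDi by (simp add: p_def combine_def s12_def split: if_splits)
      have p1: "p = combine C1 s1 (restrict p (N - C1))"
      proof (rule ext)
        fix i
        show "p i = combine C1 s1 (restrict p (N - C1)) i"
          using pout[of i] by (cases "i \<in> C1"; simp add: p_def combine_def s12_def)
      qed
      have p2: "p = combine C2 s2 (restrict p (N - C2))"
      proof (rule ext)
        fix i
        have "i \<in> C2 \<Longrightarrow> i \<notin> C1" using dj by auto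
        thus "p i = combine C2 s2 (restrict p (N - C2)) i"
          using pout[of i] by (cases "i \<in> C2"; simp add: p_def combine_def s12_def)
      qed
      have r1: "restrict p (N - C1) \<in> PiE (N - C1) Sg"
        using pin by (simp add: restrict_PiE_iff)
      have r2: "restrict p (N - C2) \<in> PiE (N - C2) Sg"
        using pin by (simp add: restrict_PiE_iff)
      have "t \<le> f (out p)" using s1(2) r1 p1 by metis
      moreover have "t \<le> g (out p)" using s2(2) r2 p2 by metis
      ultimately show "t \<le> min (f (out (combine (C1 \<union> C2) s12 sD))) (g (out (combine (C1 \<union> C2) s12 sD)))"
        by (simp add: p_def)
    qed
    thus "min (E C1 f) (E C2 g) \<le> E (C1 \<union> C2) (\<lambda>s. min (f s) (g s))"
      using EE C1 C2 C12 f g fg by (simp add: t_def)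
  qed
  have hom: "homogeneous n N E"
    unfolding homogeneous_def
  proof (intro allI impI conjI)
    fix C and f :: "'s \<Rightarrow> real" assume C: "C \<subseteq> N" and f: "f \<in> Lfun n"
    show "E C (\<lambda>s. loplus (f s) (f s)) = loplus (E C f) (E C f)"
      using EE C f Lfun_ops[OF n f] EG_mono_commute[OF gf C f mono_loplus] by simp
    show "E C (\<lambda>s. lodot (f s) (f s)) = lodot (E C f) (E C f)"
      using EE C f Lfun_ops[OF n f] EG_mono_commute[OF gf C f mono_lodot] by simp
  qed
  have lv: "liveness N E"
    unfolding liveness_def
  proof (intro allI impI)
    fix C assume C: "C \<subseteq> N"
    have "E_G N Sg out C (\<lambda>_. 1) \<le> 1" "1 \<le> E_G N Sg out C (\<lambda>_. 1)"
      unfolding EG_le_iff[OF gf C Lfun_const(1)[OF n]] EG_ge_iff[OF gf C Lfun_const(1)[OF n]]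
      using ne[OF C] ne[OF Diff_subset[of N C]] by auto
    moreover have "(\<lambda>_. 1::real) \<in> Lfun n" using Lfun_const(1)[OF n] .
    ultimately show "E C (\<lambda>_. 1) = 1" using EE C by (metis order_antisym)
  qed
  have sf: "safety N E"
    unfolding safety_def
  proof (intro allI impI)
    fix C assume C: "C \<subseteq> N"
    have "E_G N Sg out C (\<lambda>_. 0) \<le> 0" "0 \<le> E_G N Sg out C (\<lambda>_. 0)"
      unfolding EG_le_iff[OF gf C Lfun_const(2)] EG_ge_iff[OF gf C Lfun_const(2)]
      using ne[OF C] ne[OF Diff_subset[of N C]] by auto
    moreover have "(\<lambda>_. 0::real) \<in> Lfun n" using Lfun_const(2) .
    ultimately show "E C (\<lambda>_. 0) = 0" using EE C by (metis order_antisym)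
  qed
  have pr: "principal n E"
    unfolding principal_def
  proof
    define g where "g = (\<lambda>s. if s \<in> out ` PiE N Sg then 1 else (0::real))"
    show "g \<in> Lfun n" using Ln_0 Ln_1[OF n] by (auto simp: g_def Lfun_iff)
    have gp: "(\<lambda>s. lodot_pow n (g s)) = g"
      using lodot_pow_Ln[OF n Ln_0] lodot_pow_Ln[OF n Ln_1[OF n]] by (auto simp: g_def fun_eq_iff)
    show "{f \<in> Lfun n. E {} f = 1} = {f \<in> Lfun n. (\<lambda>s. lodot_pow n (g s)) \<le> f}"
      unfolding gp
    proof (intro Collect_cong conj_cong refl)
      fix f :: "'s \<Rightarrow> real" assume f: "f \<in> Lfun n"
      have b: "0 \<le> f s" "f s \<le> 1" for s using f Ln_bounds[OF n] by (auto simp: Lfun_iff)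
      have "E {} f = 1 \<longleftrightarrow> 1 \<le> E_G N Sg out {} f"
        using EE f Ln_bounds(2)[OF n EG_Ln[OF gf empty_subsetI f]] by auto
      also have "\<dots> \<longleftrightarrow> (\<forall>sD\<in>PiE N Sg. 1 \<le> f (out sD))"
        unfolding EG_ge_iff[OF gf empty_subsetI f] by simp
      also have "\<dots> \<longleftrightarrow> g \<le> f"
        using b by (auto simp: g_def le_fun_def)
      finally show "E {} f = 1 \<longleftrightarrow> g \<le> f" .
    qed
  qed
  show ?thesis unfolding truly_playable_def playable_def
    using om nm sa hom lv sf pr by blast
qed




definition ind :: "'s set \<Rightarrow> 's \<Rightarrow> real" where
  "ind X = (\<lambda>s. if s \<in> X then 1 else 0)"

definition T :: "nat \<Rightarrow> nat \<Rightarrow> real \<Rightarrow> real" where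
  "T m c x = max 0 (min 1 (2^m * x - real c))"

lemma clamp_double: "min (2 * max 0 (min 1 z)) 1 = max 0 (min 1 (2 * (z::real)))"
  by (simp add: max_def min_def)

lemma clamp_double1: "max (2 * max 0 (min 1 z) - 1) 0 = max 0 (min 1 (2 * (z::real) - 1))"
  by (simp add: max_def min_def)

lemma T_step: "T (Suc m) c x = (if even c then loplus (T m (c div 2) x) (T m (c div 2) x)
    else lodot (T m (c div 2) x) (T m (c div 2) x))"
proof (cases "even c")
  case True
  then obtain c' where c: "c = 2 * c'" by blast
  have "T (Suc m) c x = max 0 (min 1 (2 * (2^m * x - real c')))"
    by (simp add: T_def c algebra_simps)
  thus ?thesis using True c by (simp add: T_def loplus_def clamp_double)
next
  case False
  then obtain c' where c: "c = 2 * c' + 1" using oddE by blast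
  have "T (Suc m) c x = max 0 (min 1 (2 * (2^m * x - real c') - 1))"
    by (simp add: T_def c algebra_simps)
  moreover have "c div 2 = c'" using c by simp
  ultimately show ?thesis using False by (simp add: T_def lodot_def clamp_double1)
qed

lemma T_0: "0 \<le> x \<Longrightarrow> x \<le> 1 \<Longrightarrow> T 0 0 x = x"
  by (simp add: T_def)

lemma T_thresh:
  assumes n: "n \<ge> 1" and k: "1 \<le> k" "k \<le> n"
  defines "m \<equiv> n + 1"
  defines "c \<equiv> nat \<lceil>2^m * (real k - 1) / real n\<rceil>"
  shows "c < 2^m" "\<And>x. x \<in> Ln n \<Longrightarrow> T m c x = (if real k / real n \<le> x then 1 else 0)"
proof -
  define q where "q = (2::real)^m / real n"
  have np: "real n > 0" using n by simp
  have "real n < 2^n" using less_exp[of n] by (metis of_nat_less_iff of_nat_numeral of_nat_power)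
  hence "2 * real n \<le> 2^m" by (simp add: m_def)
  hence q2: "q \<ge> 2" using np by (simp add: q_def field_simps)
  have y0: "0 \<le> 2^m * (real k - 1) / real n" using k by simp
  have yq: "2^m * (real k - 1) / real n = q * (real k - 1)" by (simp add: q_def)
  have creal: "real c = of_int \<lceil>2^m * (real k - 1) / real n\<rceil>"
    unfolding c_def using y0 by (simp add: ceiling_le_zero)
  have c1: "q * (real k - 1) \<le> real c" using creal yq by (metis le_of_int_ceiling)
  have c2: "real c < q * (real k - 1) + 1" using creal yq ceiling_correct by (metis diff_less_eq)
  have "q * (real k - 1) \<le> q * (real n - 1)" using k q2 by (intro mult_left_mono) auto
  also have "\<dots> = 2^m - q" using np by (simp add: q_def field_simps)
  finally have "real c < 2^m - 1" using c2 q2 by linarith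
  hence "real c < (2::real)^m" by linarith
  hence "real c < real ((2::nat)^m)" by (simp only: of_nat_power of_nat_numeral)
  thus "c < 2^m" by (simp only: of_nat_less_iff)
  fix x assume "x \<in> Ln n"
  then obtain j where j: "j \<le> n" "x = real j / real n" by (auto simp: Ln_iff)
  have e: "2^m * x - real c = q * real j - real c" using j by (simp add: q_def)
  show "T m c x = (if real k / real n \<le> x then 1 else 0)"
  proof (cases "k \<le> j")
    case True
    hence "q * real k \<le> q * real j" using q2 by (intro mult_left_mono) auto
    moreover have "real c < q * real k - q + 1" using c2 by (simp add: algebra_simps)
    ultimately have "1 \<le> q * real j - real c" using q2 by linarith
    moreover have "real k / real n \<le> x" using True j np by (simp add: divide_right_mono)
    ultimately show ?thesis unfolding T_def e by simp
  next
    case False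
    hence "real j \<le> real k - 1" by linarith
    hence "q * real j \<le> q * (real k - 1)" using q2 by (intro mult_left_mono) auto
    hence "q * real j - real c \<le> 0" using c1 by simp
    moreover have "\<not> real k / real n \<le> x" using False j np by (simp add: divide_le_cancel)
    ultimately show ?thesis unfolding T_def e by simp
  qed
qed

lemma ind_Lfun: "n \<ge> 1 \<Longrightarrow> ind X \<in> Lfun n"
  by (simp add: ind_def Lfun_iff Ln_0 Ln_1)




locale tp =
  fixes n :: nat and N :: "'p set" and E :: "('p, 's) eff"
  assumes n: "n \<ge> 1" and finN: "finite N" and Nne: "N \<noteq> {}" and eff: "is_eff n N E"
    and tpl: "truly_playable n N E"
begin

lemma om: "outcome_monotonic n N E" and nm: "N_maximal n N E" and sa: "superadditive n N E"
  and hom: "homogeneous n N E" and lv: "liveness N E" and sf: "safety N E" and pr: "principal n E"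
  using tpl by (auto simp: truly_playable_def playable_def)

lemma E_Ln: "C \<subseteq> N \<Longrightarrow> f \<in> Lfun n \<Longrightarrow> E C f \<in> Ln n"
  using eff by (simp add: is_eff_def)

lemma indL: "ind (X :: 's set) \<in> Lfun n"
  by (simp add: ind_def Lfun_iff Ln_0 Ln_1[OF n])

lemma E_le1: "C \<subseteq> N \<Longrightarrow> f \<in> Lfun n \<Longrightarrow> E C f \<le> 1"
  using E_Ln Ln_bounds n by blast

definition alpha :: "'p set \<Rightarrow> 's set \<Rightarrow> bool" where
  "alpha C X \<longleftrightarrow> E C (ind X) = 1"

lemma E01: assumes C: "C \<subseteq> N" shows "E C (ind X) = 0 \<or> E C (ind X) = 1"
proof -
  have "(\<lambda>s. lodot (ind X s) (ind X s)) = ind X" by (auto simp: ind_def lodot_def fun_eq_iff)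
  hence "E C (ind X) = lodot (E C (ind X)) (E C (ind X))"
    using hom C indL unfolding homogeneous_def by metis
  hence v: "E C (ind X) = max (E C (ind X) + E C (ind X) - 1) 0" by (simp add: lodot_def)
  have b: "E C (ind X) \<le> 1"
    using E_Ln[OF C indL] Ln_bounds n by auto
  show ?thesis
  proof (cases "E C (ind X) + E C (ind X) - 1 \<le> 0")
    case True
    hence "E C (ind X) = 0" using v by (simp add: max_def)
    thus ?thesis ..
  next
    case False
    hence "E C (ind X) = E C (ind X) + E C (ind X) - 1" using v by (simp add: max_def)
    hence "E C (ind X) = 1" by linarith
    thus ?thesis ..
  qed
qed

lemma alpha_mono: "C \<subseteq> N \<Longrightarrow> alpha C X \<Longrightarrow> X \<subseteq> Y \<Longrightarrow> alpha C Y"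
proof -
  assume C: "C \<subseteq> N" and a: "alpha C X" and XY: "X \<subseteq> Y"
  have "ind X \<le> ind Y" using XY by (auto simp: ind_def le_fun_def)
  hence "E C (ind X) \<le> E C (ind Y)" using om C indL unfolding outcome_monotonic_def by blast
  moreover have "E C (ind Y) \<le> 1" using E_le1[OF C indL] .
  ultimately show ?thesis using a by (simp add: alpha_def)
qed

lemma alpha_super: assumes "C1 \<subseteq> N" "C2 \<subseteq> N" "C1 \<inter> C2 = {}" "alpha C1 X" "alpha C2 Y"
  shows "alpha (C1 \<union> C2) (X \<inter> Y)"
proof -
  have "min (E C1 (ind X)) (E C2 (ind Y)) \<le> E (C1 \<union> C2) (\<lambda>s. min (ind X s) (ind Y s))"
    using sa assms(1-3) indL unfolding superadditive_def by blast
  moreover have "(\<lambda>s. min (ind X s) (ind Y s)) = ind (X \<inter> Y)" by (auto simp: ind_def fun_eq_iff)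
  moreover have "C1 \<union> C2 \<subseteq> N" using assms by auto
  ultimately have "1 \<le> E (C1 \<union> C2) (ind (X \<inter> Y))" using assms(4,5) by (simp add: alpha_def)
  moreover have "E (C1 \<union> C2) (ind (X \<inter> Y)) \<le> 1" using E_le1[OF \<open>C1 \<union> C2 \<subseteq> N\<close> indL] .
  ultimately show ?thesis by (simp add: alpha_def)
qed

lemma alpha_coal_mono: assumes "C1 \<subseteq> C2" "C2 \<subseteq> N" "alpha C1 X" shows "alpha C2 X"
proof -
  have "ind (UNIV :: 's set) = (\<lambda>_. 1)" by (simp add: ind_def)
  moreover have "C2 - C1 \<subseteq> N" using assms by auto
  ultimately have "alpha (C2 - C1) UNIV" using lv unfolding alpha_def liveness_def by metis
  hence "alpha (C1 \<union> (C2 - C1)) (X \<inter> UNIV)"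
    using assms by (intro alpha_super) auto
  moreover have "C1 \<union> (C2 - C1) = C2" using assms by auto
  ultimately show ?thesis by simp
qed

lemma alpha_empty_not: "C \<subseteq> N \<Longrightarrow> \<not> alpha C {}"
  using sf by (simp add: alpha_def safety_def ind_def)

lemma core_ex: "\<exists>core. \<forall>X. alpha {} X \<longleftrightarrow> core \<subseteq> X"
proof -
  obtain g where g: "g \<in> Lfun n" and geq: "{f \<in> Lfun n. E {} f = 1} = {f \<in> Lfun n. f \<ge> (\<lambda>s. lodot_pow n (g s))}"
    using pr unfolding principal_def by blast
  have gp: "lodot_pow n (g s) = (if g s = 1 then 1 else 0)" for s
    using lodot_pow_Ln[OF n] g by (auto simp: Lfun_iff)
  show ?thesis
  proof (intro exI allI)
    fix X
    have "alpha {} X \<longleftrightarrow> ind X \<in> {f \<in> Lfun n. E {} f = 1}" using indL[of X] by (simp add: alpha_def)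
    also have "\<dots> \<longleftrightarrow> (\<lambda>s. lodot_pow n (g s)) \<le> ind X" unfolding geq using indL by simp
    also have "\<dots> \<longleftrightarrow> {s. g s = 1} \<subseteq> X" unfolding gp by (auto simp: le_fun_def ind_def split: if_splits)
    finally show "alpha {} X \<longleftrightarrow> {s. g s = 1} \<subseteq> X" .
  qed
qed

lemma alpha_N: assumes core: "\<forall>X. alpha {} X \<longleftrightarrow> core \<subseteq> X" and XC: "X \<inter> core \<noteq> {}"
  shows "alpha N X"
proof -
  have "\<not> alpha {} (- X)" using core XC by auto
  hence "E {} (ind (- X)) = 0" using E01[of "{}" "- X"] by (auto simp: alpha_def)
  moreover have "(\<lambda>s. lneg (ind X s)) = ind (- X)" by (auto simp: ind_def lneg_def fun_eq_iff)
  ultimately have "lneg (E {} (ind (- X))) \<le> E N (ind X)" using nm indL[of X] unfolding N_maximal_def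
    by metis
  hence "1 \<le> E N (ind X)" using \<open>E {} (ind (- X)) = 0\<close> by (simp add: lneg_def)
  moreover have "E N (ind X) \<le> 1" using E_le1[OF order_refl indL] .
  ultimately show ?thesis unfolding alpha_def by (rule order_antisym[rotated])
qed

lemma TE: "C \<subseteq> N \<Longrightarrow> c < 2^m \<Longrightarrow> f \<in> Lfun n \<Longrightarrow>
    (\<lambda>s. T m c (f s)) \<in> Lfun n \<and> E C (\<lambda>s. T m c (f s)) = T m c (E C f)"
proof (induction m arbitrary: c f)
  case 0
  hence c: "c = 0" by simp
  have b: "0 \<le> f s" "f s \<le> 1" for s using "0.prems"(3) Ln_bounds[OF n] by (auto simp: Lfun_iff)
  have "(\<lambda>s. T 0 c (f s)) = f" using b c T_0 by auto
  moreover have "T 0 c (E C f) = E C f" using c T_0 E_Ln[OF "0.prems"(1,3)] Ln_bounds[OF n] by auto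
  ultimately show ?case using "0.prems" by simp
next
  case (Suc m)
  have c': "c div 2 < 2^m" using Suc.prems(2) by auto
  define f' where "f' = (\<lambda>s. T m (c div 2) (f s))"
  have IH: "f' \<in> Lfun n" "E C f' = T m (c div 2) (E C f)"
    using Suc.IH[OF Suc.prems(1) c' Suc.prems(3)] by (auto simp: f'_def)
  have H: "E C (\<lambda>s. loplus (f' s) (f' s)) = loplus (E C f') (E C f')"
          "E C (\<lambda>s. lodot (f' s) (f' s)) = lodot (E C f') (E C f')"
    using hom Suc.prems(1) IH(1) unfolding homogeneous_def by auto
  show ?case
  proof (cases "even c")
    case True
    have "(\<lambda>s. T (Suc m) c (f s)) = (\<lambda>s. loplus (f' s) (f' s))"
      using True by (simp add: T_step f'_def)
    thus ?thesis using H IH Lfun_ops[OF n IH(1)] True by (simp add: T_step)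
  next
    case False
    have "(\<lambda>s. T (Suc m) c (f s)) = (\<lambda>s. lodot (f' s) (f' s))"
      using False by (simp add: T_step f'_def)
    thus ?thesis using H IH Lfun_ops[OF n IH(1)] False by (simp add: T_step)
  qed
qed

lemma threshold:
  assumes C: "C \<subseteq> N" and f: "f \<in> Lfun n" and k: "1 \<le> k" "k \<le> n"
  shows "real k / real n \<le> E C f \<longleftrightarrow> alpha C {s. real k / real n \<le> f s}"
proof -
  define m where "m = n + 1"
  define c where "c = nat \<lceil>2^m * (real k - 1) / real n\<rceil>"
  have cm: "c < 2^m" and Tx: "\<And>x. x \<in> Ln n \<Longrightarrow> T m c x = (if real k / real n \<le> x then 1 else 0)"
    using T_thresh[OF n k] unfolding m_def c_def by auto
  have "(\<lambda>s. T m c (f s)) = ind {s. real k / real n \<le> f s}"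
    using f Tx by (auto simp: Lfun_iff ind_def fun_eq_iff)
  moreover have "E C (\<lambda>s. T m c (f s)) = T m c (E C f)" using TE[OF C cm f] by blast
  moreover have "T m c (E C f) = (if real k / real n \<le> E C f then 1 else 0)"
    using Tx E_Ln[OF C f] by blast
  ultimately show ?thesis by (simp add: alpha_def)
qed

end



type_synonym ('p, 's) st = "'p set \<times> ('s \<Rightarrow> real) \<times> 's \<times> nat"

definition cl :: "('p, 's) st \<Rightarrow> 'p set" where "cl x = fst x"
definition ch :: "('p, 's) st \<Rightarrow> ('s \<Rightarrow> real)" where "ch x = fst (snd x)"
definition pt :: "('p, 's) st \<Rightarrow> 's" where "pt x = fst (snd (snd x))"
definition kk :: "('p, 's) st \<Rightarrow> nat" where "kk x = snd (snd (snd x))"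

lemma acc_simps[simp]: "cl (a,b,c,d) = a" "ch (a,b,c,d) = b" "pt (a,b,c,d) = c" "kk (a,b,c,d) = d"
  by (simp_all add: cl_def ch_def pt_def kk_def)

context tp
begin

context
  fixes core :: "'s set"
  assumes core: "\<forall>X. alpha {} X \<longleftrightarrow> core \<subseteq> X"
begin

definition act :: "('p \<Rightarrow> ('p, 's) st) \<Rightarrow> 'p \<Rightarrow> bool" where
  "act \<sigma> i \<longleftrightarrow> i \<in> cl (\<sigma> i) \<and> cl (\<sigma> i) \<subseteq> N \<and> alpha (cl (\<sigma> i)) {s. ch (\<sigma> i) s = 1} \<and>
     (\<forall>j\<in>cl (\<sigma> i). cl (\<sigma> j) = cl (\<sigma> i) \<and> ch (\<sigma> j) = ch (\<sigma> i))"

definition R :: "('p \<Rightarrow> ('p, 's) st) \<Rightarrow> 's set" where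
  "R \<sigma> = core \<inter> {s. \<forall>i\<in>N. act \<sigma> i \<longrightarrow> ch (\<sigma> i) s = 1}"

definition U :: "('p \<Rightarrow> ('p, 's) st) \<Rightarrow> 'p set" where
  "U \<sigma> = (\<Union>i\<in>{i\<in>N. act \<sigma> i}. cl (\<sigma> i))"

definition Mx :: "('p \<Rightarrow> ('p, 's) st) \<Rightarrow> nat" where
  "Mx \<sigma> = Max ((\<lambda>i. kk (\<sigma> i)) ` N)"

definition chosen :: "('p \<Rightarrow> ('p, 's) st) \<Rightarrow> 's" where
  "chosen \<sigma> = (SOME t. \<exists>i\<in>N. pt (\<sigma> i) = t \<and> kk (\<sigma> i) = Mx \<sigma>)"

definition outc :: "('p \<Rightarrow> ('p, 's) st) \<Rightarrow> 's" where
  "outc \<sigma> = (if chosen \<sigma> \<in> R \<sigma> then chosen \<sigma> else (SOME t. t \<in> R \<sigma>))"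

lemma R_alpha_gen:
  "finite I \<Longrightarrow> I \<subseteq> N \<Longrightarrow> (\<forall>i\<in>I. act \<sigma> i) \<Longrightarrow>
    alpha (\<Union>i\<in>I. cl (\<sigma> i)) (core \<inter> {s. \<forall>i\<in>I. ch (\<sigma> i) s = 1})"
proof (induction I rule: finite_induct)
  case empty
  have "alpha {} core" using core by blast
  moreover have "(\<Union>i\<in>{}. cl (\<sigma> i)) = {}" "core \<inter> {s. \<forall>i\<in>{}. ch (\<sigma> i) s = 1} = core" by simp_all
  ultimately show ?case by simp
next
  case (insert i I)
  have IH: "alpha (\<Union>i\<in>I. cl (\<sigma> i)) (core \<inter> {s. \<forall>i\<in>I. ch (\<sigma> i) s = 1})"
    using insert.IH insert.prems by blast
  have ai: "act \<sigma> i" using insert.prems by blast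
  have "\<forall>j\<in>I. cl (\<sigma> j) \<subseteq> N" using insert.prems(2) unfolding act_def by blast
  hence UN: "(\<Union>i\<in>I. cl (\<sigma> i)) \<subseteq> N" by blast
  show ?case
  proof (cases "\<exists>j\<in>I. cl (\<sigma> i) \<inter> cl (\<sigma> j) \<noteq> {}")
    case True
    then obtain j l where j: "j \<in> I" "l \<in> cl (\<sigma> i)" "l \<in> cl (\<sigma> j)" by blast
    have aj: "act \<sigma> j" using insert.prems j by blast
    have ai': "\<forall>j'\<in>cl (\<sigma> i). cl (\<sigma> j') = cl (\<sigma> i) \<and> ch (\<sigma> j') = ch (\<sigma> i)"
      using ai unfolding act_def by (elim conjE)
    have aj': "\<forall>j'\<in>cl (\<sigma> j). cl (\<sigma> j') = cl (\<sigma> j) \<and> ch (\<sigma> j') = ch (\<sigma> j)"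
      using aj unfolding act_def by (elim conjE)
    have e1: "cl (\<sigma> i) = cl (\<sigma> j)" "ch (\<sigma> i) = ch (\<sigma> j)"
      using ai'[rule_format, OF j(2)] aj'[rule_format, OF j(3)] by simp_all
    have "(\<Union>i\<in>insert i I. cl (\<sigma> i)) = (\<Union>i\<in>I. cl (\<sigma> i))" using e1 j by blast
    moreover have "{s. \<forall>i\<in>insert i I. ch (\<sigma> i) s = 1} = {s. \<forall>i\<in>I. ch (\<sigma> i) s = 1}"
      using e1(2) j(1) by fastforce
    ultimately show ?thesis using IH by simp
  next
    case False
    hence dj: "cl (\<sigma> i) \<inter> (\<Union>i\<in>I. cl (\<sigma> i)) = {}" by blast
    have Ci1: "cl (\<sigma> i) \<subseteq> N" using ai unfolding act_def by (elim conjE)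
    have Ci2: "alpha (cl (\<sigma> i)) {s. ch (\<sigma> i) s = 1}" using ai unfolding act_def by (elim conjE)
    have "alpha (cl (\<sigma> i) \<union> (\<Union>i\<in>I. cl (\<sigma> i))) ({s. ch (\<sigma> i) s = 1} \<inter> (core \<inter> {s. \<forall>i\<in>I. ch (\<sigma> i) s = 1}))"
      by (rule alpha_super[OF Ci1 UN dj Ci2 IH])
    moreover have "{s. ch (\<sigma> i) s = 1} \<inter> (core \<inter> {s. \<forall>i\<in>I. ch (\<sigma> i) s = 1}) =
        core \<inter> {s. \<forall>i\<in>insert i I. ch (\<sigma> i) s = 1}" by blast
    ultimately show ?thesis by simp
  qed
qed

lemma U_sub: "U \<sigma> \<subseteq> N" unfolding U_def act_def by blast

lemma R_alpha: "alpha (U \<sigma>) (R \<sigma>)"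
proof -
  have "alpha (\<Union>i\<in>{i\<in>N. act \<sigma> i}. cl (\<sigma> i)) (core \<inter> {s. \<forall>i\<in>{i\<in>N. act \<sigma> i}. ch (\<sigma> i) s = 1})"
    by (rule R_alpha_gen) (use finN in auto)
  moreover have "core \<inter> {s. \<forall>i\<in>{i\<in>N. act \<sigma> i}. ch (\<sigma> i) s = 1} = R \<sigma>" by (auto simp: R_def)
  ultimately show ?thesis by (simp add: U_def)
qed

lemma R_ne: "R \<sigma> \<noteq> {}"
  using R_alpha[of \<sigma>] alpha_empty_not[OF U_sub] by auto

lemma outc_in: "outc \<sigma> \<in> R \<sigma>"
  using R_ne[of \<sigma>] by (auto simp: outc_def intro: someI_ex)

lemma R_core: "R \<sigma> \<subseteq> core" by (auto simp: R_def)

lemma forces_if: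
  assumes C: "C \<subseteq> N" and a: "alpha C X"
  shows "\<exists>sC\<in>PiE C (\<lambda>_. UNIV). \<forall>sD\<in>PiE (N-C) (\<lambda>_. UNIV). outc (combine C sC sD) \<in> X"
proof -
  define sC :: "'p \<Rightarrow> ('p, 's) st" where "sC = restrict (\<lambda>_. (C, ind X, undefined, 0)) C"
  have sC: "sC \<in> PiE C (\<lambda>_. UNIV)" by (simp add: sC_def)
  show ?thesis
  proof (intro bexI[OF _ sC] ballI)
    fix sD assume sD: "sD \<in> PiE (N-C) (\<lambda>_. UNIV :: ('p, 's) st set)"
    define \<sigma> where "\<sigma> = combine C sC sD"
    have "R \<sigma> \<subseteq> X"
    proof (cases "C = {}")
      case True
      hence "core \<subseteq> X" using a core by simp
      thus ?thesis using R_core by blast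
    next
      case False
      then obtain i where i: "i \<in> C" by blast
      have sig: "\<sigma> j = (C, ind X, undefined, 0)" if "j \<in> C" for j
        using that by (simp add: \<sigma>_def combine_def sC_def)
      have X: "{s. ind X s = 1} = X" by (auto simp: ind_def)
      have "act \<sigma> i" unfolding act_def using sig i C a X by simp
      moreover have "i \<in> N" using i C by blast
      ultimately have "R \<sigma> \<subseteq> {s. ch (\<sigma> i) s = 1}" unfolding R_def by blast
      thus ?thesis using sig[OF i] X by simp
    qed
    thus "outc (combine C sC sD) \<in> X" using outc_in[of \<sigma>] by (auto simp: \<sigma>_def)
  qed
qed

lemma forces_only_if:
  assumes C: "C \<subseteq> N"
    and H: "\<exists>sC\<in>PiE C (\<lambda>_. UNIV). \<forall>sD\<in>PiE (N-C) (\<lambda>_. UNIV). outc (combine C sC sD) \<in> X"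
  shows "alpha C X"
proof -
  obtain sC :: "'p \<Rightarrow> ('p, 's) st" where sC: "sC \<in> PiE C (\<lambda>_. UNIV)"
    and H': "\<forall>sD\<in>PiE (N-C) (\<lambda>_. UNIV). outc (combine C sC sD) \<in> X"
    using H by blast
  show ?thesis
  proof (cases "C = N")
    case True
    have "(\<lambda>_. undefined) \<in> PiE (N - C) (\<lambda>_. UNIV :: ('p, 's) st set)" using True by simp
    hence "outc (combine C sC (\<lambda>_. undefined)) \<in> X" using H' by blast
    moreover have "outc (combine C sC (\<lambda>_. undefined)) \<in> core" using outc_in R_core by blast
    ultimately have "X \<inter> core \<noteq> {}" by blast
    thus ?thesis using alpha_N[OF core] True by simp
  next
    case False
    then obtain d where d: "d \<in> N" "d \<notin> C" using C by blast
    have finC: "finite C" using finN C finite_subset by blast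
    define M0 where "M0 = Max (insert 0 ((\<lambda>i. kk (sC i)) ` C))"
    have kM: "kk (sC i) \<le> M0" if "i \<in> C" for i
      unfolding M0_def using finC that by (intro Max_ge) auto
    define sDt :: "'s \<Rightarrow> 'p \<Rightarrow> ('p, 's) st" where
      "sDt t = restrict (\<lambda>_. ({}, \<lambda>_. 0, t, Suc M0)) (N - C)" for t
    define \<sigma>t where "\<sigma>t t = combine C sC (sDt t)" for t
    have sDt_in: "sDt t \<in> PiE (N-C) (\<lambda>_. UNIV)" for t by (simp add: sDt_def)
    have cl_s: "cl (\<sigma>t t i) = (if i \<in> C then cl (sC i) else if i \<in> N then {} else cl (undefined :: ('p, 's) st))" for t i
      by (simp add: \<sigma>t_def sDt_def combine_def)
    have ch_s: "ch (\<sigma>t t i) = (if i \<in> C then ch (sC i) else if i \<in> N then (\<lambda>_. 0) else ch (undefined :: ('p, 's) st))" for t i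
      by (simp add: \<sigma>t_def sDt_def combine_def)
    have pt_s: "pt (\<sigma>t t i) = (if i \<in> C then pt (sC i) else if i \<in> N then t else pt (undefined :: ('p, 's) st))" for t i
      by (simp add: \<sigma>t_def sDt_def combine_def)
    have kk_s: "kk (\<sigma>t t i) = (if i \<in> C then kk (sC i) else if i \<in> N then Suc M0 else kk (undefined :: ('p, 's) st))" for t i
      by (simp add: \<sigma>t_def sDt_def combine_def)
    have act_eq: "act (\<sigma>t t) i = act (\<sigma>t t') i" for t t' i
      unfolding act_def cl_s ch_s ..
    have R_eq: "R (\<sigma>t t) = R (\<sigma>t t')" for t t'
    proof -
      have ae: "act (\<sigma>t t) = act (\<sigma>t t')" by (rule ext, rule act_eq)
      show ?thesis by (simp only: R_def ch_s ae)
    qed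
    define t0 :: 's where "t0 = undefined"
    have U_C: "U (\<sigma>t t0) \<subseteq> C"
    proof
      fix j assume "j \<in> U (\<sigma>t t0)"
      then obtain i where i: "i \<in> N" "act (\<sigma>t t0) i" "j \<in> cl (\<sigma>t t0 i)" unfolding U_def by blast
      have a1: "i \<in> cl (\<sigma>t t0 i)" using i(2) unfolding act_def by (elim conjE)
      have a2: "cl (\<sigma>t t0 i) \<subseteq> N" using i(2) unfolding act_def by (elim conjE)
      have a3: "\<forall>j\<in>cl (\<sigma>t t0 i). cl (\<sigma>t t0 j) = cl (\<sigma>t t0 i) \<and> ch (\<sigma>t t0 j) = ch (\<sigma>t t0 i)"
        using i(2) unfolding act_def by (elim conjE)
      have "cl (\<sigma>t t0 j) = cl (\<sigma>t t0 i)" using a3 i(3) by blast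
      hence ne: "cl (\<sigma>t t0 j) \<noteq> {}" using a1 by blast
      have jN: "j \<in> N" using a2 i(3) by blast
      show "j \<in> C"
      proof (rule ccontr)
        assume "j \<notin> C"
        hence "cl (\<sigma>t t0 j) = {}" using cl_s[of t0 j] jN by simp
        thus False using ne by blast
      qed
    qed
    have Mx_eq: "Mx (\<sigma>t t) = Suc M0" for t
      unfolding Mx_def
    proof (rule Max_eqI)
      show "finite ((\<lambda>i. kk (\<sigma>t t i)) ` N)" using finN by simp
      show "y \<le> Suc M0" if yin: "y \<in> (\<lambda>i. kk (\<sigma>t t i)) ` N" for y
      proof -
        obtain i where i: "i \<in> N" "y = kk (\<sigma>t t i)" using yin by blast
        show ?thesis
        proof (cases "i \<in> C")
          case True thus ?thesis using i kM[OF True] kk_s[of t i] by simp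
        next
          case False thus ?thesis using i kk_s[of t i] by simp
        qed
      qed
      show "Suc M0 \<in> (\<lambda>i. kk (\<sigma>t t i)) ` N"
      proof
        show "Suc M0 = kk (\<sigma>t t d)" using d kk_s[of t d] by simp
      qed (rule d(1))
    qed
    have chosen_eq: "chosen (\<sigma>t t) = t" for t
      unfolding chosen_def Mx_eq
    proof (rule some_equality)
      show "\<exists>i\<in>N. pt (\<sigma>t t i) = t \<and> kk (\<sigma>t t i) = Suc M0"
        using d pt_s[of t d] kk_s[of t d] by auto
      fix t' assume "\<exists>i\<in>N. pt (\<sigma>t t i) = t' \<and> kk (\<sigma>t t i) = Suc M0"
      then obtain i where i: "i \<in> N" "pt (\<sigma>t t i) = t'" "kk (\<sigma>t t i) = Suc M0" by blast
      have "i \<notin> C"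
      proof
        assume "i \<in> C"
        hence "kk (\<sigma>t t i) \<le> M0" using kM[of i] kk_s[of t i] by simp
        thus False using i(3) by simp
      qed
      thus "t' = t" using i pt_s[of t i] by simp
    qed
    have R0X: "R (\<sigma>t t0) \<subseteq> X"
    proof
      fix t assume "t \<in> R (\<sigma>t t0)"
      hence "t \<in> R (\<sigma>t t)" using R_eq by blast
      hence "outc (\<sigma>t t) = t" unfolding outc_def chosen_eq by simp
      moreover have "outc (\<sigma>t t) \<in> X" using H' sDt_in unfolding \<sigma>t_def by blast
      ultimately show "t \<in> X" by simp
    qed
    have "alpha C (R (\<sigma>t t0))" by (rule alpha_coal_mono[OF U_C C R_alpha])
    thus ?thesis using alpha_mono[OF C _ R0X] by blast
  qed
qed

lemma forward_core:
  "\<exists>(Sg :: 'p \<Rightarrow> ('p set \<times> ('s \<Rightarrow> real) \<times> 's \<times> nat) set) out.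
     game_form N Sg out \<and> (\<forall>C f. C \<subseteq> N \<longrightarrow> f \<in> Lfun n \<longrightarrow> E C f = E_G N Sg out C f)"
proof (intro exI[of _ "\<lambda>_. UNIV"] exI[of _ outc] conjI allI impI)
  show gf: "game_form N (\<lambda>_. UNIV :: ('p, 's) st set) outc" by (simp add: game_form_def)
  fix C and f :: "'s \<Rightarrow> real" assume C: "C \<subseteq> N" and f: "f \<in> Lfun n"
  show "E C f = E_G N (\<lambda>_. UNIV) outc C f"
  proof (rule Ln_eq_by_thresholds[OF n E_Ln[OF C f] EG_Ln[OF gf C f]])
    fix k assume k: "1 \<le> k" "k \<le> n"
    have "real k / real n \<le> E C f \<longleftrightarrow> alpha C {s. real k / real n \<le> f s}"
      by (rule threshold[OF C f k])
    also have "\<dots> \<longleftrightarrow> (\<exists>sC\<in>PiE C (\<lambda>_. UNIV). \<forall>sD\<in>PiE (N-C) (\<lambda>_. UNIV).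
        outc (combine C sC sD) \<in> {s. real k / real n \<le> f s})"
      using forces_if[OF C] forces_only_if[OF C] by blast
    also have "\<dots> \<longleftrightarrow> real k / real n \<le> E_G N (\<lambda>_. UNIV) outc C f"
      unfolding EG_ge_iff[OF gf C f] by simp
    finally show "real k / real n \<le> E C f \<longleftrightarrow> real k / real n \<le> E_G N (\<lambda>_. UNIV) outc C f" .
  qed
qed

end

lemma forward:
  "\<exists>(Sg :: 'p \<Rightarrow> ('p set \<times> ('s \<Rightarrow> real) \<times> 's \<times> nat) set) out.
     game_form N Sg out \<and> (\<forall>C f. C \<subseteq> N \<longrightarrow> f \<in> Lfun n \<longrightarrow> E C f = E_G N Sg out C f)"
proof -
  obtain core where "\<forall>X. alpha {} X \<longleftrightarrow> core \<subseteq> X" using core_ex by blast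
  thus ?thesis by (rule forward_core)
qed

end

theorem mainTheorem5:
  fixes n :: nat and N :: "'p set" and E :: "('p, 's) eff"
  assumes "n \<ge> 1" and "finite N" and "card N \<ge> 2" and "\<exists>a b :: 's. a \<noteq> b"
    and "is_eff n N E"
  shows "(truly_playable n N E \<longrightarrow>
            (\<exists>(Sg :: 'p \<Rightarrow> ('p set \<times> ('s \<Rightarrow> real) \<times> 's \<times> nat) set) out.
               game_form N Sg out \<and>
               (\<forall>C f. C \<subseteq> N \<longrightarrow> f \<in> Lfun n \<longrightarrow> E C f = E_G N Sg out C f)))
       \<and> (\<forall>(Sg :: 'p \<Rightarrow> 'b set) out.
            game_form N Sg out \<longrightarrow>
            (\<forall>C f. C \<subseteq> N \<longrightarrow> f \<in> Lfun n \<longrightarrow> E C f = E_G N Sg out C f) \<longrightarrow>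
            truly_playable n N E)"
proof (intro conjI impI allI)
  assume tpl: "truly_playable n N E"
  have "N \<noteq> {}" using assms(3) by auto
  then interpret tp n N E using assms tpl by unfold_locales
  show "\<exists>(Sg :: 'p \<Rightarrow> ('p set \<times> ('s \<Rightarrow> real) \<times> 's \<times> nat) set) out.
               game_form N Sg out \<and>
               (\<forall>C f. C \<subseteq> N \<longrightarrow> f \<in> Lfun n \<longrightarrow> E C f = E_G N Sg out C f)"
    by (rule forward)
next
  fix Sg :: "'p \<Rightarrow> 'b set" and out
  assume "game_form N Sg out" "\<forall>C f. C \<subseteq> N \<longrightarrow> f \<in> Lfun n \<longrightarrow> E C f = E_G N Sg out C f"
  thus "truly_playable n N E" using reverse_dir[OF assms(1)] by blast
qed


end
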